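(* Let $0<q<1$, $M\in\mathbb{N}$, $r=q^{-M}$, and let $a,b,c,d,f,g,v,w$ be complex parameters with $\max\{|ac|,|ad|,|bc|,|bd|,|q/(bc)|\}<1$. Then \begin{align*} &\int_c^d\frac{\left(\frac{qt}{c},\frac{qt}{d};q\right)_\infty}{(at,bt;q)_\infty}\sum_{k=0}^\infty\frac{\left(r,f,g,\frac{c}{t},abcd;q\right)_k\left(\frac{qt}{bcd}\right)^k}{(v,w,ac,q;q)_k}\;{}_3\Phi_2\left[\begin{matrix}rq^k,fq^k,gq^k;\\ vq^k,wq^k;\end{matrix}\;q;\,q\right]{\rm d}_qt\\ &\qquad=\frac{d(1-q)\left(q,\frac{dq}{c},\frac{c}{d},abcd;q\right)_\infty}{(ac,ad,bc,bd;q)_\infty}\;{}_3\Phi_2\left[\begin{matrix}r,f,g;\\ v,w;\end{matrix}\;q;\,\frac{q}{bc}\right]. \end{align*}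
   Context: Throughout $0<q<1$. For complex $\alpha$: $(\alpha;q)_0=1$, $(\alpha;q)_n=\prod_{k=0}^{n-1}(1-\alpha q^k)$, $(\alpha;q)_\infty=\prod_{k=0}^\infty(1-\alpha q^k)$, and $(\alpha_1,\dots,\alpha_m;q)_n=(\alpha_1;q)_n\cdots(\alpha_m;q)_n$ (also for $n=\infty$). ${}_{3}\Phi_{2}\left[\begin{matrix}a_1,a_2,a_3;\\ b_1,b_2;\end{matrix}\,q;z\right]=\sum_{n=0}^\infty\frac{(a_1,a_2,a_3;q)_n}{(b_1,b_2;q)_n}\frac{z^n}{(q;q)_n}$. The $q$-integral (Jackson integral) is $\int_0^x F(t)\,{\rm d}_qt=x(1-q)\sum_{n=0}^\infty F(xq^n)q^n$ and $\int_c^dF(t)\,{\rm d}_qt=\int_0^dF(t)\,{\rm d}_qt-\int_0^cF(t)\,{\rm d}_qt$. *)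

theory Defs
  imports "HOL-Analysis.Analysis"
begin

definition qpoch :: "complex \<Rightarrow> real \<Rightarrow> nat \<Rightarrow> complex" where
  "qpoch \<alpha> q n = (\<Prod>k<n. 1 - \<alpha> * of_real (q ^ k))"

definition qpoch_inf :: "complex \<Rightarrow> real \<Rightarrow> complex" where
  "qpoch_inf \<alpha> q = lim (\<lambda>n. qpoch \<alpha> q n)"

definition phi32 :: "complex \<Rightarrow> complex \<Rightarrow> complex \<Rightarrow> complex \<Rightarrow> complex \<Rightarrow> real \<Rightarrow> complex \<Rightarrow> complex" where
  "phi32 a1 a2 a3 b1 b2 q z =
     (\<Sum>n. qpoch a1 q n * qpoch a2 q n * qpoch a3 q n
           / (qpoch b1 q n * qpoch b2 q n * qpoch (of_real q) q n) * z ^ n)"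

definition jackson0 :: "(complex \<Rightarrow> complex) \<Rightarrow> real \<Rightarrow> complex \<Rightarrow> complex" where
  "jackson0 F q x = x * of_real (1 - q) * (\<Sum>n. F (x * of_real (q ^ n)) * of_real (q ^ n))"

definition jackson :: "(complex \<Rightarrow> complex) \<Rightarrow> real \<Rightarrow> complex \<Rightarrow> complex \<Rightarrow> complex" where
  "jackson F q c d = jackson0 F q d - jackson0 F q c"

end

theory Submission
  imports Defs
begin

lemma qpoch_0[simp]: "qpoch x q 0 = 1" by (simp add: qpoch_def)

lemma qpoch_Suc: "qpoch x q (Suc n) = qpoch x q n * (1 - x * of_real (q ^ n))"
  by (simp add: qpoch_def)

lemma qpoch_Suc_shift: "qpoch x q (Suc n) = (1 - x) * qpoch (x * of_real q) q n"
  unfolding qpoch_def by (subst prod.lessThan_Suc_shift) (simp add: mult.assoc)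

lemma qpoch_add: "qpoch x q (m + n) = qpoch x q m * qpoch (x * of_real (q ^ m)) q n"
  unfolding qpoch_def
proof (induction n)
  case 0 then show ?case by simp
next
  case (Suc n)
  then show ?case by (simp add: mult.assoc power_add mult_ac)
qed

lemma qpoch_LIMSEQ:
  assumes "0 < q" "q < 1"
  shows "(\<lambda>n. qpoch x q n) \<longlonglongrightarrow> qpoch_inf x q"
proof -
  let ?f = "\<lambda>i. 1 - x * of_real (q ^ i)"
  have "summable (\<lambda>i. norm (?f i - 1))"
    using assms by (simp add: norm_mult norm_power abs_of_pos summable_geometric)
  then have "abs_convergent_prod ?f" by (rule summable_imp_abs_convergent_prod)
  then have cp: "convergent_prod ?f" by (rule abs_convergent_prod_imp_convergent_prod)
  have "(\<lambda>n. \<Prod>i\<le>n. ?f i) \<longlonglongrightarrow> prodinf ?f" by (rule convergent_prod_LIMSEQ[OF cp])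
  then have "(\<lambda>n. qpoch x q (Suc n)) \<longlonglongrightarrow> prodinf ?f"
    by (simp add: qpoch_def lessThan_Suc_atMost)
  then have L: "(\<lambda>n. qpoch x q n) \<longlonglongrightarrow> prodinf ?f" by (rule LIMSEQ_imp_Suc)
  then have "qpoch_inf x q = prodinf ?f" unfolding qpoch_inf_def by (rule limI)
  with L show ?thesis by simp
qed

lemma qpoch_inf_prodinf:
  assumes "0 < q" "q < 1"
  shows "qpoch_inf x q = prodinf (\<lambda>i. 1 - x * of_real (q ^ i))"
    and "convergent_prod (\<lambda>i. 1 - x * of_real (q ^ i))"
proof -
  let ?f = "\<lambda>i. 1 - x * of_real (q ^ i)"
  have "summable (\<lambda>i. norm (?f i - 1))"
    using assms by (simp add: norm_mult norm_power abs_of_pos summable_geometric)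
  then have "abs_convergent_prod ?f" by (rule summable_imp_abs_convergent_prod)
  then show cp: "convergent_prod ?f" by (rule abs_convergent_prod_imp_convergent_prod)
  have "(\<lambda>n. \<Prod>i\<le>n. ?f i) \<longlonglongrightarrow> prodinf ?f" by (rule convergent_prod_LIMSEQ[OF cp])
  then have "(\<lambda>n. qpoch x q (Suc n)) \<longlonglongrightarrow> prodinf ?f"
    by (simp add: qpoch_def lessThan_Suc_atMost)
  then have L: "(\<lambda>n. qpoch x q n) \<longlonglongrightarrow> prodinf ?f" by (rule LIMSEQ_imp_Suc)
  then show "qpoch_inf x q = prodinf ?f" unfolding qpoch_inf_def by (rule limI)
qed

lemma qpoch_inf_rec:
  assumes "0 < q" "q < 1"
  shows "qpoch_inf x q = (1 - x) * qpoch_inf (x * of_real q) q"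
proof -
  have "(\<lambda>n. qpoch x q (Suc n)) \<longlonglongrightarrow> qpoch_inf x q"
    using qpoch_LIMSEQ[OF assms] by (rule LIMSEQ_Suc)
  moreover have "(\<lambda>n. qpoch x q (Suc n)) \<longlonglongrightarrow> (1 - x) * qpoch_inf (x * of_real q) q"
    unfolding qpoch_Suc_shift by (intro tendsto_mult tendsto_const qpoch_LIMSEQ[OF assms])
  ultimately show ?thesis by (rule LIMSEQ_unique)
qed

lemma qpoch_inf_split:
  assumes "0 < q" "q < 1"
  shows "qpoch_inf x q = qpoch x q n * qpoch_inf (x * of_real (q ^ n)) q"
proof (induction n)
  case 0 then show ?case by simp
next
  case (Suc n)
  have "qpoch_inf (x * of_real (q ^ n)) q
      = (1 - x * of_real (q ^ n)) * qpoch_inf (x * of_real (q ^ Suc n)) q"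
    by (subst qpoch_inf_rec[OF assms]) (simp add: mult_ac)
  with Suc show ?case by (simp add: qpoch_Suc mult.assoc)
qed

lemma qpoch_inf_nonzero:
  assumes "0 < q" "q < 1" "\<And>i. x * of_real (q ^ i) \<noteq> 1"
  shows "qpoch_inf x q \<noteq> 0"
  unfolding qpoch_inf_prodinf(1)[OF assms(1,2)]
  by (rule prodinf_nonzero[OF qpoch_inf_prodinf(2)[OF assms(1,2)]]) (use assms(3) in auto)

lemma small_ne_1:
  assumes "0 < q" "q < 1" "cmod x < 1"
  shows "x * of_real (q ^ i) \<noteq> 1"
proof
  assume h: "x * of_real (q ^ i) = 1"
  have "q ^ i \<le> 1" using assms by (simp add: power_le_one)
  then have "cmod (x * of_real (q ^ i)) \<le> cmod x"
    using assms by (simp add: norm_mult norm_power mult_left_le)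
  with h assms show False by simp
qed

lemma qpoch_nonzero:
  assumes "\<And>i. x * of_real (q ^ i) \<noteq> 1"
  shows "qpoch x q n \<noteq> 0"
  using assms by (simp add: qpoch_def)

lemma qpoch_inf_shift_lim:
  assumes "0 < q" "q < 1"
  shows "(\<lambda>n. qpoch_inf (y * of_real (q ^ n)) q) \<longlonglongrightarrow> 1"
proof -
  have "(\<lambda>n. cmod y * q ^ n) \<longlonglongrightarrow> cmod y * 0"
    using assms by (intro tendsto_mult tendsto_const LIMSEQ_power_zero) auto
  from LIMSEQ_D[OF this, of 1] obtain N where "\<forall>n\<ge>N. norm (cmod y * q ^ n - cmod y * 0) < 1"
    by auto
  then have N: "cmod y * q ^ N < 1" by auto
  define z where "z = y * of_real (q ^ N)"
  have zs: "cmod z < 1" using N assms by (simp add: z_def norm_mult norm_power)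
  have nz: "qpoch_inf z q \<noteq> 0"
    by (rule qpoch_inf_nonzero[OF assms small_ne_1[OF assms zs]])
  have nzn: "qpoch z q n \<noteq> 0" for n
    by (rule qpoch_nonzero[OF small_ne_1[OF assms zs]])
  have eq: "qpoch_inf (y * of_real (q ^ (n + N))) q = qpoch_inf z q / qpoch z q n" for n
    using qpoch_inf_split[OF assms, of z n] nzn[of n]
    by (simp add: z_def power_add field_simps mult.assoc mult.commute)
  have "(\<lambda>n. qpoch_inf z q / qpoch z q n) \<longlonglongrightarrow> qpoch_inf z q / qpoch_inf z q"
    by (intro tendsto_divide tendsto_const qpoch_LIMSEQ[OF assms] nz)
  moreover have "(\<lambda>n. qpoch_inf (y * of_real (q ^ (n + N))) q) = (\<lambda>n. qpoch_inf z q / qpoch z q n)"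
    using eq by (intro ext) blast
  ultimately have "(\<lambda>n. qpoch_inf (y * of_real (q ^ (n + N))) q) \<longlonglongrightarrow> 1"
    using nz by simp
  then show ?thesis by (rule LIMSEQ_offset)
qed


lemma prod_bound_gen:
  fixes f :: "nat \<Rightarrow> complex"
  assumes "B \<ge> 1" "\<And>j. j < k \<Longrightarrow> norm (f j) \<le> (if j < J then B else 1)"
  shows "norm (\<Prod>j<k. f j) \<le> B ^ J"
proof -
  have "norm (\<Prod>j<k. f j) \<le> B ^ (min k J)" using assms(2)
  proof (induction k)
    case 0 then show ?case by simp
  next
    case (Suc k)
    have IH: "norm (\<Prod>j<k. f j) \<le> B ^ (min k J)" using Suc by auto
    have fk: "norm (f k) \<le> (if k < J then B else 1)" using Suc by auto
    have "norm (\<Prod>j<Suc k. f j) = norm (\<Prod>j<k. f j) * norm (f k)" by (simp add: norm_mult)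
    also have "\<dots> \<le> B ^ (min k J) * (if k < J then B else 1)"
      using IH fk assms(1) by (intro mult_mono) auto
    also have "\<dots> = B ^ (min (Suc k) J)" by (cases "k < J") (auto simp: min_def)
    finally show ?case .
  qed
  also have "\<dots> \<le> B ^ J" using assms(1) by (intro power_increasing) auto
  finally show ?thesis .
qed

lemma exists_J:
  fixes q s e :: real
  assumes "0 < q" "q < 1" "e > 0"
  shows "\<exists>J. \<forall>j\<ge>J. s * q ^ j \<le> e"
proof -
  have "(\<lambda>j. s * q ^ j) \<longlonglongrightarrow> s * 0" using assms by (intro tendsto_intros LIMSEQ_power_zero) auto
  from LIMSEQ_D[OF this assms(3)] obtain J where "\<forall>j\<ge>J. norm (s * q ^ j - s * 0) < e" by auto
  then show ?thesis by (auto intro!: exI[of _ J] less_imp_le simp: abs_less_iff)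
qed

lemma prod_d_bound:
  fixes q :: real and \<rho> :: complex
  assumes q: "0 < q" "q < 1"
  shows "\<exists>C. \<forall>n k. n \<ge> 1 \<longrightarrow> norm (\<Prod>j<k. of_real (q ^ n) - \<rho> * of_real (q ^ j)) \<le> (C::real)"
proof -
  let ?s = "cmod \<rho>"
  obtain J where J: "\<forall>j\<ge>J. ?s * q ^ j \<le> 1 - q" using exists_J[OF q, of "1 - q" ?s] q by auto
  have "norm (\<Prod>j<k. of_real (q ^ n) - \<rho> * of_real (q ^ j)) \<le> (1 + ?s) ^ J" if n: "n \<ge> 1" for n k
  proof (rule prod_bound_gen)
    fix j assume "j < k"
    have qn: "q ^ n \<le> q" using power_decreasing[of 1 n q] q n by simp
    have qj: "q ^ j \<le> 1" using q by (simp add: power_le_one)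
    have "norm (of_real (q ^ n) - \<rho> * of_real (q ^ j) :: complex) \<le> q ^ n + ?s * q ^ j"
      using norm_triangle_ineq4[of "of_real (q ^ n) :: complex" "\<rho> * of_real (q ^ j)"] q
      by (simp add: norm_mult norm_power)
    also have "\<dots> \<le> (if j < J then 1 + ?s else 1)"
    proof (cases "j < J")
      case True
      have "?s * q ^ j \<le> ?s" using qj by (simp add: mult_left_le)
      then show ?thesis using True qn q by auto
    next
      case False
      then have "cmod \<rho> * q ^ j \<le> 1 - q" using J by auto
      then show ?thesis using False qn by auto
    qed
    finally show "norm (of_real (q ^ n) - \<rho> * of_real (q ^ j)) \<le> (if j < J then 1 + ?s else 1)" .
  qed auto
  then show ?thesis by blast
qed

lemma prod_d_lim:
  fixes q :: real and \<rho> :: complex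
  assumes q: "0 < q" "q < 1" and n: "n \<ge> 1"
  shows "(\<lambda>k. \<Prod>j<k. of_real (q ^ n) - \<rho> * of_real (q ^ j) :: complex) \<longlonglongrightarrow> 0"
proof -
  let ?s = "cmod \<rho>"
  obtain J where J: "\<forall>j\<ge>J. ?s * q ^ j \<le> (1 - q) / 2" using exists_J[OF q, of "(1 - q) / 2" ?s] q by auto
  have qn: "q ^ n \<le> q" using power_decreasing[of 1 n q] q n by simp
  let ?f = "\<lambda>k. \<Prod>j<k. of_real (q ^ n) - \<rho> * of_real (q ^ j) :: complex"
  have "summable ?f"
  proof (rule summable_ratio_test[of "(1 + q) / 2" J])
    show "(1 + q) / 2 < 1" using q by simp
    fix k assume k: "k \<ge> J"
    have "norm (of_real (q ^ n) - \<rho> * of_real (q ^ k) :: complex) \<le> q ^ n + ?s * q ^ k"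
      using norm_triangle_ineq4[of "of_real (q ^ n) :: complex" "\<rho> * of_real (q ^ k)"] q
      by (simp add: norm_mult norm_power)
    also have "\<dots> \<le> (1 + q) / 2" using J k qn by force
    finally have fk: "norm (of_real (q ^ n) - \<rho> * of_real (q ^ k) :: complex) \<le> (1 + q) / 2" .
    have "norm (?f (Suc k)) = norm (of_real (q ^ n) - \<rho> * of_real (q ^ k) :: complex) * norm (?f k)"
      by (simp add: norm_mult)
    also have "\<dots> \<le> (1 + q) / 2 * norm (?f k)" by (intro mult_right_mono fk) auto
    finally show "norm (?f (Suc k)) \<le> (1 + q) / 2 * norm (?f k)" .
  qed
  then show ?thesis by (rule summable_LIMSEQ_zero)
qed

lemma prod_c_bound:
  fixes q :: real and \<rho> :: complex
  assumes q: "0 < q" "q < 1"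
  shows "\<exists>C. \<forall>n k. norm (\<Prod>j<k. \<rho> * of_real (q ^ n) - \<rho> * of_real (q ^ j)) \<le> (C::real)"
proof -
  let ?s = "cmod \<rho>"
  obtain J where J: "\<forall>j\<ge>J. ?s * q ^ j \<le> 1" using exists_J[OF q, of "1" ?s] q by auto
  have "norm (\<Prod>j<k. \<rho> * of_real (q ^ n) - \<rho> * of_real (q ^ j)) \<le> (1 + ?s) ^ J" for n k
  proof (cases "n < k")
    case True
    then have z: "(\<Prod>j<k. \<rho> * of_real (q ^ n) - \<rho> * of_real (q ^ j)) = 0"
      by (intro prod_zero bexI[of _ n]) auto
    show ?thesis unfolding z by simp
  next
    case False
    show ?thesis
    proof (rule prod_bound_gen)
      fix j assume "j < k"
      with False have jn: "j \<le> n" by auto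
      have qj: "q ^ j \<le> 1" using q by (simp add: power_le_one)
      have qnj: "q ^ n \<le> q ^ j" using q jn by (simp add: power_decreasing)
      have "norm (\<rho> * of_real (q ^ n) - \<rho> * of_real (q ^ j) :: complex) = ?s * \<bar>q ^ n - q ^ j\<bar>"
        by (simp add: right_diff_distrib[symmetric] norm_mult of_real_diff[symmetric] del: of_real_power of_real_diff)
      also have "\<dots> \<le> ?s * q ^ j" using qnj q by (intro mult_left_mono) auto
      also have "\<dots> \<le> (if j < J then 1 + ?s else 1)"
      proof (cases "j < J")
        case True
        have "?s * q ^ j \<le> ?s" using qj by (simp add: mult_left_le)
        then show ?thesis using True by auto
      next
        case False
        then show ?thesis using J by auto
      qed
      finally show "norm (\<rho> * of_real (q ^ n) - \<rho> * of_real (q ^ j)) \<le> (if j < J then 1 + ?s else 1)" .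
    qed auto
  qed
  then show ?thesis by blast
qed


lemma conv_summable_geo:
  fixes X :: "nat \<Rightarrow> complex"
  assumes "convergent X" "0 < q" "q < 1"
  shows "summable (\<lambda>n. X n * of_real (q ^ n))"
proof -
  from convergent_imp_Bseq[OF assms(1)] obtain B where B: "B > 0" "\<And>n. norm (X n) \<le> B"
    unfolding Bseq_def by auto
  show ?thesis
  proof (rule summable_comparison_test[of _ "\<lambda>n. B * q ^ n"])
    show "\<exists>N. \<forall>n\<ge>N. norm (X n * of_real (q ^ n)) \<le> B * q ^ n"
      using B assms by (auto simp: norm_mult norm_power intro!: mult_right_mono)
    show "summable (\<lambda>n. B * q ^ n)" using assms by (intro summable_mult summable_geometric) auto
  qed
qed

lemma tannery_geo:
  fixes Wn :: "nat \<Rightarrow> complex" and T :: "nat \<Rightarrow> nat \<Rightarrow> complex"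
  assumes q: "0 < q" "q < 1" and WB: "Bseq Wn"
    and TB: "\<And>n k. n \<ge> Nz \<Longrightarrow> norm (T n k) \<le> C"
    and TL: "\<And>n. (\<lambda>k. T n k) \<longlonglongrightarrow> L n"
  shows "(\<lambda>k. \<Sum>n. Wn n * T n k * of_real (q ^ n)) \<longlonglongrightarrow> (\<Sum>n. Wn n * L n * of_real (q ^ n))"
proof -
  from WB obtain B where B: "B > 0" "\<And>n. norm (Wn n) \<le> B" unfolding Bseq_def by auto
  have "eventually (\<lambda>n. summable (\<lambda>k. norm (Wn k * T k n * of_real (q ^ k)))) sequentially \<and>
        summable (\<lambda>n. norm (Wn n * L n * of_real (q ^ n))) \<and>
        ((\<lambda>n. suminf (\<lambda>k. Wn k * T k n * of_real (q ^ k))) \<longlonglongrightarrow> suminf (\<lambda>n. Wn n * L n * of_real (q ^ n)))"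
  proof (rule tannerys_theorem[where M = "\<lambda>n. B * C * q ^ n"])
    show "\<And>k. (\<lambda>n. Wn k * T k n * of_real (q ^ k)) \<longlonglongrightarrow> Wn k * L k * of_real (q ^ k)"
      by (intro tendsto_intros TL)
    show "\<forall>\<^sub>F (k, n) in sequentially \<times>\<^sub>F sequentially. norm (Wn k * T k n * of_real (q ^ k)) \<le> B * C * q ^ k"
      unfolding eventually_prod_sequentially
    proof (intro exI[of _ Nz] allI impI)
      fix m n assume "m \<ge> Nz" "n \<ge> Nz"
      have "norm (Wn n * T n m * of_real (q ^ n)) = norm (Wn n) * norm (T n m) * q ^ n"
        using q by (simp add: norm_mult norm_power)
      also have "\<dots> \<le> B * C * q ^ n"
        using B TB[OF \<open>n \<ge> Nz\<close>, of m] q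
        by (intro mult_right_mono mult_mono) auto
      finally show "case (n, m) of (k, n) \<Rightarrow> norm (Wn k * T k n * of_real (q ^ k)) \<le> B * C * q ^ k" by simp
    qed
    show "summable (\<lambda>n. B * C * q ^ n)" using q by (intro summable_mult summable_geometric) auto
  qed auto
  then show ?thesis by blast
qed

lemma qpoch_inf_1: "0 < q \<Longrightarrow> q < 1 \<Longrightarrow> qpoch_inf 1 q = 0"
  using qpoch_inf_rec[of q 1] by simp

lemma qpoch_inf_shift_lim':
  assumes "0 < q" "q < 1" "\<And>n. f n = y * of_real (q ^ n)"
  shows "(\<lambda>n. qpoch_inf (f n) q) \<longlonglongrightarrow> 1"
  using qpoch_inf_shift_lim[OF assms(1,2), of y] assms(3) by simp

locale aa =
  fixes q :: real and a b c d :: complex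
  assumes q0: "0 < q" and q1: "q < 1" and c0: "c \<noteq> 0" and d0: "d \<noteq> 0"
    and ac: "cmod (a * c) < 1" and ad: "cmod (a * d) < 1"
    and bc: "cmod (b * c) < 1" and bd: "cmod (b * d) < 1"
begin

definition W :: "complex \<Rightarrow> complex" where
  "W t = qpoch_inf (of_real q * t / c) q * qpoch_inf (of_real q * t / d) q
            / (qpoch_inf (a * t) q * qpoch_inf (b * t) q)"

definition P :: "nat \<Rightarrow> complex \<Rightarrow> complex" where
  "P k t = (\<Prod>j<k. t - c * of_real (q ^ j))"

definition S :: "nat \<Rightarrow> complex \<Rightarrow> complex" where
  "S k x = (\<Sum>n. W (x * of_real (q ^ n)) * P k (x * of_real (q ^ n)) * of_real (q ^ n))"

definition K :: "nat \<Rightarrow> complex" where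
  "K k = d * S k d - c * S k c"

lemma qq: "0 < q" "q < 1" using q0 q1 by auto

lemma pt_small:
  assumes "x = c \<or> x = d" and e: "e = a \<or> e = b"
  shows "cmod (e * (x * of_real (q ^ n))) < 1"
proof -
  have "cmod (e * x) < 1" using assms ac ad bc bd by auto
  moreover have "q ^ n \<le> 1" using qq by (simp add: power_le_one)
  ultimately have "cmod (e * x) * q ^ n < 1"
    by (meson le_less_trans mult_left_le norm_ge_zero order.strict_implies_order qq(1) zero_le_power order_less_imp_le)
  then show ?thesis using qq by (simp add: norm_mult norm_power mult.assoc[symmetric])
qed

lemma W_lim:
  "(\<lambda>n. W (x * of_real (q ^ n))) \<longlonglongrightarrow> 1"
proof -
  have "(\<lambda>n. W (x * of_real (q ^ n))) \<longlonglongrightarrow> 1 * 1 / (1 * 1)"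
    unfolding W_def
    by (intro tendsto_intros qpoch_inf_shift_lim'[OF qq, where y = "of_real q * x / c"]
         qpoch_inf_shift_lim'[OF qq, where y = "of_real q * x / d"]
         qpoch_inf_shift_lim'[OF qq, where y = "a * x"]
         qpoch_inf_shift_lim'[OF qq, where y = "b * x"]) auto
  then show ?thesis by simp
qed

lemma P_lim: "(\<lambda>n. P k (x * of_real (q ^ n))) \<longlonglongrightarrow> P k 0"
proof -
  have h: "(\<lambda>n. x * of_real (q ^ n)) \<longlonglongrightarrow> x * of_real 0"
    using qq by (intro tendsto_intros LIMSEQ_power_zero) auto
  then have "(\<lambda>n. P k (x * of_real (q ^ n))) \<longlonglongrightarrow> (\<Prod>j<k. x * of_real 0 - c * of_real (q ^ j))"
    unfolding P_def by (intro tendsto_prod tendsto_diff tendsto_const h)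
  then show ?thesis by (simp add: P_def)
qed

lemma summable_S: "summable (\<lambda>n. W (x * of_real (q ^ n)) * P k (x * of_real (q ^ n)) * of_real (q ^ n))"
  by (rule conv_summable_geo[OF _ qq]) (use W_lim P_lim convergent_def tendsto_mult in blast)


definition R :: "nat \<Rightarrow> complex \<Rightarrow> complex" where
  "R k t = (\<Prod>j<k. t - c * of_real (q ^ Suc j))"

definition G :: "nat \<Rightarrow> complex \<Rightarrow> complex" where
  "G k t = qpoch_inf (t / c) q * qpoch_inf (t / d) q / (qpoch_inf (a * t) q * qpoch_inf (b * t) q) * R k t"

definition D :: "nat \<Rightarrow> complex \<Rightarrow> complex" where
  "D k t = W t * ((1 - a * b * c * d * of_real (q ^ k)) / (c * d) * P (Suc k) t
                 - (1 - a * c * of_real (q ^ k)) * (1 - b * c * of_real (q ^ k)) / c * P k t)"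

lemma P_Suc: "P (Suc k) t = P k t * (t - c * of_real (q ^ k))"
  by (simp add: P_def)

lemma P_Suc_R: "P (Suc k) t = (t - c) * R k t"
  unfolding P_def R_def by (subst prod.lessThan_Suc_shift) simp

lemma R_q: "R k (of_real q * t) = of_real q ^ k * P k t"
proof -
  have "R k (of_real q * t) = (\<Prod>j<k. of_real q * (t - c * of_real (q ^ j)))"
    unfolding R_def by (intro prod.cong) (auto simp: algebra_simps)
  also have "\<dots> = of_real q ^ k * P k t"
    by (simp add: prod.distrib P_def)
  finally show ?thesis .
qed

lemma G_diff:
  assumes x: "x = c \<or> x = d"
  shows "G k (x * of_real (q ^ n)) - G k (x * of_real (q ^ Suc n))
         = (x * of_real (q ^ n)) * D k (x * of_real (q ^ n))"
proof -
  define t where "t = x * of_real (q ^ n)"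
  have u: "x * of_real (q ^ Suc n) = of_real q * t" by (simp add: t_def)
  have a1: "cmod (a * t) < 1" using pt_small[OF x] t_def by auto
  have b1: "cmod (b * t) < 1" using pt_small[OF x] t_def by auto
  have na: "qpoch_inf (a * t) q \<noteq> 0" by (rule qpoch_inf_nonzero[OF qq small_ne_1[OF qq a1]])
  have nb: "qpoch_inf (b * t) q \<noteq> 0" by (rule qpoch_inf_nonzero[OF qq small_ne_1[OF qq b1]])
  have na1: "1 - a * t \<noteq> 0" using a1 by auto
  have nb1: "1 - b * t \<noteq> 0" using b1 by auto
  have rc: "qpoch_inf (t / c) q = (1 - t / c) * qpoch_inf (of_real q * t / c) q"
    using qpoch_inf_rec[OF qq, of "t / c"] by (simp add: mult.commute)
  have rd: "qpoch_inf (t / d) q = (1 - t / d) * qpoch_inf (of_real q * t / d) q"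
    using qpoch_inf_rec[OF qq, of "t / d"] by (simp add: mult.commute)
  have ra: "qpoch_inf (a * (of_real q * t)) q = qpoch_inf (a * t) q / (1 - a * t)"
    using qpoch_inf_rec[OF qq, of "a * t"] na1 by (simp add: mult_ac field_simps)
  have rb: "qpoch_inf (b * (of_real q * t)) q = qpoch_inf (b * t) q / (1 - b * t)"
    using qpoch_inf_rec[OF qq, of "b * t"] nb1 by (simp add: mult_ac field_simps)
  have G1: "G k t = W t * (1 - t / c) * (1 - t / d) * R k t"
    unfolding G_def W_def rc rd using na nb c0 d0 by (simp add: field_simps)
  have G2: "G k (of_real q * t) = W t * (1 - a * t) * (1 - b * t) * (of_real q ^ k * P k t)"
    unfolding G_def W_def ra rb R_q using na nb na1 nb1 c0 d0 by (simp add: field_simps)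
  have E: "(1 - t / c) * R k t = - (P k t * (t - c * of_real (q ^ k))) / c"
    using P_Suc[of k t] P_Suc_R[of k t] c0 by (simp add: field_simps)
  have "G k t - G k (of_real q * t) = t * D k t"
  proof -
    have "G k t = W t * (1 - t / d) * ((1 - t / c) * R k t)" unfolding G1 by (simp add: mult_ac)
    also have "\<dots> = W t * (1 - t / d) * (- (P k t * (t - c * of_real (q ^ k))) / c)" by (simp add: E)
    finally have G1': "G k t = W t * (1 - t / d) * (- (P k t * (t - c * of_real (q ^ k))) / c)" .
    show ?thesis unfolding G1' G2 D_def P_Suc using c0 d0
      by (simp add: field_simps)
  qed
  then show ?thesis unfolding u t_def .
qed


lemma R_lim: "(\<lambda>n. R k (x * of_real (q ^ n))) \<longlonglongrightarrow> R k 0"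
proof -
  have h: "(\<lambda>n. x * of_real (q ^ n)) \<longlonglongrightarrow> x * of_real 0"
    using qq by (intro tendsto_intros LIMSEQ_power_zero) auto
  then have "(\<lambda>n. R k (x * of_real (q ^ n))) \<longlonglongrightarrow> (\<Prod>j<k. x * of_real 0 - c * of_real (q ^ Suc j))"
    unfolding R_def by (intro tendsto_prod tendsto_diff tendsto_const h)
  then show ?thesis by (simp add: R_def)
qed

lemma G_lim: "(\<lambda>n. G k (x * of_real (q ^ n))) \<longlonglongrightarrow> R k 0"
proof -
  have "(\<lambda>n. G k (x * of_real (q ^ n))) \<longlonglongrightarrow> 1 * 1 / (1 * 1) * R k 0"
    unfolding G_def
    by (intro tendsto_intros R_lim qpoch_inf_shift_lim'[OF qq, where y = "x / c"]
         qpoch_inf_shift_lim'[OF qq, where y = "x / d"]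
         qpoch_inf_shift_lim'[OF qq, where y = "a * x"]
         qpoch_inf_shift_lim'[OF qq, where y = "b * x"]) auto
  then show ?thesis by simp
qed

lemma G_0: assumes "x = c \<or> x = d" shows "G k x = 0"
  using assms c0 d0 qpoch_inf_1[OF qq] by (auto simp: G_def)

lemma D_sum:
  assumes x: "x = c \<or> x = d"
  shows "x * (\<Sum>n. D k (x * of_real (q ^ n)) * of_real (q ^ n)) = - R k 0"
proof -
  have fe: "G k (x * of_real (q ^ n)) - G k (x * of_real (q ^ Suc n))
            = x * (D k (x * of_real (q ^ n)) * of_real (q ^ n))" for n
    by (subst G_diff[OF x]) (simp add: mult_ac)
  have s1: "(\<lambda>n. G k (x * of_real (q ^ n)) - G k (x * of_real (q ^ Suc n))) sums (G k (x * of_real (q ^ 0)) - R k 0)"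
    by (rule telescope_sums'[OF G_lim])
  have "(\<lambda>n. x * (D k (x * of_real (q ^ n)) * of_real (q ^ n))) sums (- R k 0)"
    using s1 G_0[OF x] unfolding fe by simp
  then have "(\<lambda>n. D k (x * of_real (q ^ n)) * of_real (q ^ n)) sums (- R k 0 / x)"
    using sums_divide[of _ _ x] x c0 d0 by fastforce
  then have "(\<Sum>n. D k (x * of_real (q ^ n)) * of_real (q ^ n)) = - R k 0 / x"
    by (rule sums_unique[symmetric])
  then show ?thesis using x c0 d0 by auto
qed

lemma D_sum_split:
  "(\<Sum>n. D k (x * of_real (q ^ n)) * of_real (q ^ n))
   = (1 - a * b * c * d * of_real (q ^ k)) / (c * d) * S (Suc k) x
     - (1 - a * c * of_real (q ^ k)) * (1 - b * c * of_real (q ^ k)) / c * S k x"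
proof -
  let ?A = "(1 - a * b * c * d * of_real (q ^ k)) / (c * d)"
  let ?B = "(1 - a * c * of_real (q ^ k)) * (1 - b * c * of_real (q ^ k)) / c"
  let ?f = "\<lambda>j n. W (x * of_real (q ^ n)) * P j (x * of_real (q ^ n)) * of_real (q ^ n)"
  have "(\<lambda>n. D k (x * of_real (q ^ n)) * of_real (q ^ n)) = (\<lambda>n. ?A * ?f (Suc k) n - ?B * ?f k n)"
    by (auto simp: D_def algebra_simps)
  moreover have "(\<lambda>n. ?A * ?f (Suc k) n - ?B * ?f k n) sums (?A * S (Suc k) x - ?B * S k x)"
    unfolding S_def by (intro sums_diff sums_mult summable_sums summable_S)
  ultimately show ?thesis by (simp add: sums_iff)
qed

lemma K_rec:
  "(1 - a * b * c * d * of_real (q ^ k)) * K (Suc k)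
   = d * (1 - a * c * of_real (q ^ k)) * (1 - b * c * of_real (q ^ k)) * K k"
proof -
  have ec: "c * ((1 - a * b * c * d * of_real (q ^ k)) / (c * d) * S (Suc k) c
     - (1 - a * c * of_real (q ^ k)) * (1 - b * c * of_real (q ^ k)) / c * S k c) = - R k 0"
    using D_sum[of c k] D_sum_split[of k c] by simp
  have ed: "d * ((1 - a * b * c * d * of_real (q ^ k)) / (c * d) * S (Suc k) d
     - (1 - a * c * of_real (q ^ k)) * (1 - b * c * of_real (q ^ k)) / c * S k d) = - R k 0"
    using D_sum[of d k] D_sum_split[of k d] by simp
  define A where "A = (1 - a * b * c * d * of_real (q ^ k)) / (c * d)"
  define B where "B = (1 - a * c * of_real (q ^ k)) * (1 - b * c * of_real (q ^ k)) / c"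
  have "A * K (Suc k) - B * K k = d * (A * S (Suc k) d - B * S k d) - c * (A * S (Suc k) c - B * S k c)"
    unfolding K_def by (simp add: algebra_simps)
  also have "\<dots> = 0" using ec ed unfolding A_def B_def by simp
  finally have "A * K (Suc k) - B * K k = 0" .
  have e1: "c * d * A = 1 - a * b * c * d * of_real (q ^ k)" using c0 d0 by (simp add: A_def)
  have e2: "c * d * B = d * (1 - a * c * of_real (q ^ k)) * (1 - b * c * of_real (q ^ k))"
    using c0 d0 by (simp add: B_def)
  have "(1 - a * b * c * d * of_real (q ^ k)) * K (Suc k)
        - d * (1 - a * c * of_real (q ^ k)) * (1 - b * c * of_real (q ^ k)) * K k
        = c * d * (A * K (Suc k) - B * K k)"
    unfolding e1[symmetric] e2[symmetric] by (simp add: algebra_simps)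
  also have "\<dots> = 0" using \<open>A * K (Suc k) - B * K k = 0\<close> by simp
  finally show ?thesis by simp
qed


lemma abcd_small: "cmod (a * b * c * d) < 1"
proof -
  have "cmod (a * b * c * d) = cmod (a * c) * cmod (b * d)" by (simp add: norm_mult mult_ac)
  also have "\<dots> < 1 * 1" using ac bd by (intro mult_strict_mono') auto
  finally show ?thesis by simp
qed

lemma K_closed:
  "K k = K 0 * d ^ k * qpoch (a * c) q k * qpoch (b * c) q k / qpoch (a * b * c * d) q k"
proof (induction k)
  case 0 then show ?case by simp
next
  case (Suc k)
  have n1: "1 - a * b * c * d * of_real (q ^ k) \<noteq> 0"
    using small_ne_1[OF qq abcd_small, of k] by auto
  have n2: "qpoch (a * b * c * d) q k \<noteq> 0"
    by (rule qpoch_nonzero[OF small_ne_1[OF qq abcd_small]])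
  have "K (Suc k) = d * (1 - a * c * of_real (q ^ k)) * (1 - b * c * of_real (q ^ k)) * K k
                    / (1 - a * b * c * d * of_real (q ^ k))"
    using K_rec[of k] n1 by (simp add: field_simps)
  also have "\<dots> = K 0 * d ^ Suc k * qpoch (a * c) q (Suc k) * qpoch (b * c) q (Suc k) / qpoch (a * b * c * d) q (Suc k)"
    unfolding Suc qpoch_Suc using n1 n2 by (simp add: field_simps)
  finally show ?case .
qed

lemma W_Bseq: "Bseq (\<lambda>n. W (x * of_real (q ^ n)))"
  using W_lim convergent_def convergent_imp_Bseq by blast

lemma Sd_eq: "S k d / d ^ k = (\<Sum>n. W (d * of_real (q ^ n)) * (\<Prod>j<k. of_real (q ^ n) - c / d * of_real (q ^ j)) * of_real (q ^ n))"
proof -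
  have "S k d / d ^ k = (\<Sum>n. W (d * of_real (q ^ n)) * P k (d * of_real (q ^ n)) * of_real (q ^ n) / d ^ k)"
    unfolding S_def by (rule suminf_divide[OF summable_S, symmetric])
  also have "\<dots> = (\<Sum>n. W (d * of_real (q ^ n)) * (\<Prod>j<k. of_real (q ^ n) - c / d * of_real (q ^ j)) * of_real (q ^ n))"
  proof (intro suminf_cong)
    fix n
    have "P k (d * of_real (q ^ n)) = (\<Prod>j<k. d * (of_real (q ^ n) - c / d * of_real (q ^ j)))"
      unfolding P_def using d0 by (intro prod.cong) (auto simp: field_simps)
    also have "\<dots> = d ^ k * (\<Prod>j<k. of_real (q ^ n) - c / d * of_real (q ^ j))"
      by (simp add: prod.distrib)
    finally show "W (d * of_real (q ^ n)) * P k (d * of_real (q ^ n)) * of_real (q ^ n) / d ^ k =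
          W (d * of_real (q ^ n)) * (\<Prod>j<k. of_real (q ^ n) - c / d * of_real (q ^ j)) * of_real (q ^ n)"
      using d0 by simp
  qed
  finally show ?thesis .
qed

lemma Sc_eq: "S k c / d ^ k = (\<Sum>n. W (c * of_real (q ^ n)) * (\<Prod>j<k. c / d * of_real (q ^ n) - c / d * of_real (q ^ j)) * of_real (q ^ n))"
proof -
  have "S k c / d ^ k = (\<Sum>n. W (c * of_real (q ^ n)) * P k (c * of_real (q ^ n)) * of_real (q ^ n) / d ^ k)"
    unfolding S_def by (rule suminf_divide[OF summable_S, symmetric])
  also have "\<dots> = (\<Sum>n. W (c * of_real (q ^ n)) * (\<Prod>j<k. c / d * of_real (q ^ n) - c / d * of_real (q ^ j)) * of_real (q ^ n))"
  proof (intro suminf_cong)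
    fix n
    have "P k (c * of_real (q ^ n)) = (\<Prod>j<k. d * (c / d * of_real (q ^ n) - c / d * of_real (q ^ j)))"
      unfolding P_def using d0 by (intro prod.cong) (auto simp: field_simps)
    also have "\<dots> = d ^ k * (\<Prod>j<k. c / d * of_real (q ^ n) - c / d * of_real (q ^ j))"
      by (simp add: prod.distrib)
    finally show "W (c * of_real (q ^ n)) * P k (c * of_real (q ^ n)) * of_real (q ^ n) / d ^ k =
          W (c * of_real (q ^ n)) * (\<Prod>j<k. c / d * of_real (q ^ n) - c / d * of_real (q ^ j)) * of_real (q ^ n)"
      using d0 by simp
  qed
  finally show ?thesis .
qed

lemma Sd_lim: "(\<lambda>k. S k d / d ^ k) \<longlonglongrightarrow> W d * qpoch_inf (c / d) q"
proof -
  define L :: "nat \<Rightarrow> complex" where "L n = (if n = 0 then qpoch_inf (c / d) q else 0)" for n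
  obtain C where C: "\<forall>n k. n \<ge> 1 \<longrightarrow> norm (\<Prod>j<k. of_real (q ^ n) - c / d * of_real (q ^ j)) \<le> C"
    using prod_d_bound[OF qq] by blast
  have "(\<lambda>k. \<Sum>n. W (d * of_real (q ^ n)) * (\<Prod>j<k. of_real (q ^ n) - c / d * of_real (q ^ j)) * of_real (q ^ n))
        \<longlonglongrightarrow> (\<Sum>n. W (d * of_real (q ^ n)) * L n * of_real (q ^ n))"
  proof (rule tannery_geo[OF qq W_Bseq, where Nz = 1 and C = C])
    show "norm (\<Prod>j<k. of_real (q ^ n) - c / d * of_real (q ^ j)) \<le> C" if "n \<ge> 1" for n k
      using C that by blast
    show "(\<lambda>k. \<Prod>j<k. of_real (q ^ n) - c / d * of_real (q ^ j)) \<longlonglongrightarrow> L n" for n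
    proof (cases "n = 0")
      case True
      have "(\<lambda>k. qpoch (c / d) q k) \<longlonglongrightarrow> qpoch_inf (c / d) q" by (rule qpoch_LIMSEQ[OF qq])
      then show ?thesis using True by (simp add: L_def qpoch_def)
    next
      case False
      then show ?thesis using prod_d_lim[OF qq, of n "c / d"] by (simp add: L_def)
    qed
  qed
  moreover have "(\<Sum>n. W (d * of_real (q ^ n)) * L n * of_real (q ^ n)) = W d * qpoch_inf (c / d) q"
    by (subst suminf_finite[of "{0}"]) (auto simp: L_def)
  ultimately show ?thesis unfolding Sd_eq by simp
qed

lemma Sc_lim: "(\<lambda>k. S k c / d ^ k) \<longlonglongrightarrow> 0"
proof -
  obtain C where C: "\<forall>n k. norm (\<Prod>j<k. c / d * of_real (q ^ n) - c / d * of_real (q ^ j)) \<le> C"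
    using prod_c_bound[OF qq] by blast
  have "(\<lambda>k. \<Sum>n. W (c * of_real (q ^ n)) * (\<Prod>j<k. c / d * of_real (q ^ n) - c / d * of_real (q ^ j)) * of_real (q ^ n))
        \<longlonglongrightarrow> (\<Sum>n. W (c * of_real (q ^ n)) * 0 * of_real (q ^ n))"
  proof (rule tannery_geo[OF qq W_Bseq, where Nz = 0 and C = C])
    show "norm (\<Prod>j<k. c / d * of_real (q ^ n) - c / d * of_real (q ^ j)) \<le> C" for n k
      using C by blast
    show "(\<lambda>k. \<Prod>j<k. c / d * of_real (q ^ n) - c / d * of_real (q ^ j)) \<longlonglongrightarrow> 0" for n
    proof (rule tendsto_eventually)
      show "\<forall>\<^sub>F k in sequentially. (\<Prod>j<k. c / d * of_real (q ^ n) - c / d * of_real (q ^ j)) = 0"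
        unfolding eventually_sequentially
        by (intro exI[of _ "Suc n"] allI impI prod_zero bexI[of _ n]) auto
    qed
  qed
  then show ?thesis unfolding Sc_eq by simp
qed

lemma K0_eq: "K 0 = d * W d * qpoch_inf (c / d) q * qpoch_inf (a * b * c * d) q
                     / (qpoch_inf (a * c) q * qpoch_inf (b * c) q)"
proof -
  have eq: "K k / d ^ k = d * (S k d / d ^ k) - c * (S k c / d ^ k)" for k
    unfolding K_def using d0 by (simp add: field_simps)
  have l1: "(\<lambda>k. K k / d ^ k) \<longlonglongrightarrow> d * (W d * qpoch_inf (c / d) q) - c * 0"
    unfolding eq by (intro tendsto_intros Sd_lim Sc_lim)
  have nabcd: "qpoch_inf (a * b * c * d) q \<noteq> 0"
    by (rule qpoch_inf_nonzero[OF qq small_ne_1[OF qq abcd_small]])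
  have nac: "qpoch_inf (a * c) q \<noteq> 0" by (rule qpoch_inf_nonzero[OF qq small_ne_1[OF qq ac]])
  have nbc: "qpoch_inf (b * c) q \<noteq> 0" by (rule qpoch_inf_nonzero[OF qq small_ne_1[OF qq bc]])
  have eq2: "K k / d ^ k = K 0 * qpoch (a * c) q k * qpoch (b * c) q k / qpoch (a * b * c * d) q k" for k
    using d0 by (subst K_closed) (simp add: field_simps)
  have l2: "(\<lambda>k. K k / d ^ k) \<longlonglongrightarrow> K 0 * qpoch_inf (a * c) q * qpoch_inf (b * c) q / qpoch_inf (a * b * c * d) q"
    unfolding eq2 by (intro tendsto_intros qpoch_LIMSEQ[OF qq] nabcd)
  have "K 0 * qpoch_inf (a * c) q * qpoch_inf (b * c) q / qpoch_inf (a * b * c * d) q = d * (W d * qpoch_inf (c / d) q)"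
    using LIMSEQ_unique[OF l2 l1] by simp
  then show ?thesis using nabcd nac nbc by (simp add: field_simps)
qed

end


lemma Qn_nonzero:
  assumes "0 < q" "q < 1"
  shows "qpoch (of_real q) q n \<noteq> 0"
  by (rule qpoch_nonzero[OF small_ne_1]) (use assms in auto)

lemma qbin_id:
  fixes q :: real and u :: complex
  assumes q: "0 < q" "q < 1"
  shows "(\<Sum>k\<le>N. qpoch u q k * u ^ (N - k) / (qpoch (of_real q) q k * qpoch (of_real q) q (N - k)))
         = 1 / qpoch (of_real q) q N"
proof (induction N arbitrary: u)
  case 0 then show ?case by simp
next
  case (Suc N)
  let ?Q = "qpoch (of_real q) q"
  have nz: "?Q n \<noteq> 0" for n using Qn_nonzero[OF q] .
  have nzq: "(1::complex) - of_real q * of_real q ^ m \<noteq> 0" for m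
    using small_ne_1[OF q, of "of_real q" m] q by auto
  define f where "f j = qpoch u q j * u ^ (Suc N - j) / (?Q j * ?Q (Suc N - j))" for j
  have split: "(1 - of_real q ^ Suc N) * f j
      = f j * (1 - of_real q ^ (Suc N - j)) + f j * of_real q ^ (Suc N - j) * (1 - of_real q ^ j)"
    if "j \<le> Suc N" for j
  proof -
    have "of_real q ^ (Suc N - j) * of_real q ^ j = (of_real q ^ Suc N :: complex)"
      using that by (simp add: power_add[symmetric])
    then show ?thesis by (simp add: algebra_simps)
  qed
  have s1: "(\<Sum>j\<le>Suc N. f j * (1 - of_real q ^ (Suc N - j)))
          = u * (\<Sum>k\<le>N. qpoch u q k * u ^ (N - k) / (?Q k * ?Q (N - k)))"
  proof -
    have "(\<Sum>j\<le>Suc N. f j * (1 - of_real q ^ (Suc N - j))) = (\<Sum>j\<le>N. f j * (1 - of_real q ^ (Suc N - j)))"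
      by (simp add: sum.atMost_Suc)
    also have "\<dots> = (\<Sum>j\<le>N. u * (qpoch u q j * u ^ (N - j) / (?Q j * ?Q (N - j))))"
    proof (intro sum.cong refl)
      fix j assume "j \<in> {..N}"
      then have j: "Suc N - j = Suc (N - j)" by auto
      show "f j * (1 - of_real q ^ (Suc N - j)) = u * (qpoch u q j * u ^ (N - j) / (?Q j * ?Q (N - j)))"
        unfolding f_def j qpoch_Suc using nz[of j] nz[of "N - j"] q nzq[of "N - j"]
        by (simp add: field_simps)
    qed
    finally show ?thesis by (simp add: sum_distrib_left)
  qed
  have s2: "(\<Sum>j\<le>Suc N. f j * of_real q ^ (Suc N - j) * (1 - of_real q ^ j))
          = (1 - u) * (\<Sum>k\<le>N. qpoch (u * of_real q) q k * (u * of_real q) ^ (N - k) / (?Q k * ?Q (N - k)))"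
  proof -
    have "(\<Sum>j\<le>Suc N. f j * of_real q ^ (Suc N - j) * (1 - of_real q ^ j))
        = (\<Sum>i\<le>N. f (Suc i) * of_real q ^ (Suc N - Suc i) * (1 - of_real q ^ Suc i))"
      unfolding sum.atMost_Suc_shift by simp
    also have "\<dots> = (\<Sum>i\<le>N. (1 - u) * (qpoch (u * of_real q) q i * (u * of_real q) ^ (N - i) / (?Q i * ?Q (N - i))))"
    proof (intro sum.cong refl)
      fix i assume "i \<in> {..N}"
      show "f (Suc i) * of_real q ^ (Suc N - Suc i) * (1 - of_real q ^ Suc i)
            = (1 - u) * (qpoch (u * of_real q) q i * (u * of_real q) ^ (N - i) / (?Q i * ?Q (N - i)))"
        unfolding f_def using nz[of i] nz[of "N - i"] q nzq[of i]
        by (simp add: qpoch_Suc_shift[of u] qpoch_Suc[of "of_real q" q i] field_simps power_mult_distrib)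
    qed
    finally show ?thesis by (simp add: sum_distrib_left)
  qed
  have "(1 - of_real q ^ Suc N) * (\<Sum>j\<le>Suc N. f j) = (\<Sum>j\<le>Suc N. (1 - of_real q ^ Suc N) * f j)"
    by (rule sum_distrib_left)
  also have "\<dots> = (\<Sum>j\<le>Suc N. f j * (1 - of_real q ^ (Suc N - j)) + f j * of_real q ^ (Suc N - j) * (1 - of_real q ^ j))"
    by (intro sum.cong refl split) auto
  also have "\<dots> = (\<Sum>j\<le>Suc N. f j * (1 - of_real q ^ (Suc N - j))) + (\<Sum>j\<le>Suc N. f j * of_real q ^ (Suc N - j) * (1 - of_real q ^ j))"
    by (rule sum.distrib)
  also have "\<dots> = u * (1 / ?Q N) + (1 - u) * (1 / ?Q N)"
    unfolding s1 s2 Suc.IH by (rule refl)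
  also have "\<dots> = 1 / ?Q N" using nz[of N] by (simp add: field_simps)
  finally have "(1 - of_real q ^ Suc N) * (\<Sum>j\<le>Suc N. f j) = 1 / ?Q N" .
  moreover have "1 - of_real q ^ Suc N \<noteq> (0::complex)"
  proof
    assume "1 - of_real q ^ Suc N = (0::complex)"
    then have "q ^ Suc N = 1" by (metis eq_iff_diff_eq_0 of_real_eq_1_iff of_real_power)
    moreover have "q ^ Suc N < 1" using q power_strict_decreasing[of 0 "Suc N" q] by simp
    ultimately show False by simp
  qed
  ultimately have "(\<Sum>j\<le>Suc N. f j) = (1 / ?Q N) / (1 - of_real q ^ Suc N)"
    by (metis nonzero_mult_div_cancel_left)
  also have "\<dots> = 1 / (?Q N * (1 - of_real q ^ Suc N))" by simp
  finally have "(\<Sum>j\<le>Suc N. f j) = 1 / (?Q N * (1 - of_real q ^ Suc N))" .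
  also have "\<dots> = 1 / ?Q (Suc N)" by (simp add: qpoch_Suc)
  finally show ?case by (simp add: f_def)
qed

lemma qbin_id_z:
  fixes q :: real and u z :: complex
  assumes q: "0 < q" "q < 1" and uz: "u * z = of_real q"
  shows "(\<Sum>k\<le>N. qpoch u q k * z ^ k * of_real q ^ (N - k) / (qpoch (of_real q) q k * qpoch (of_real q) q (N - k)))
         = z ^ N / qpoch (of_real q) q N"
proof -
  have "(\<Sum>k\<le>N. qpoch u q k * z ^ k * of_real q ^ (N - k) / (qpoch (of_real q) q k * qpoch (of_real q) q (N - k)))
      = (\<Sum>k\<le>N. z ^ N * (qpoch u q k * u ^ (N - k) / (qpoch (of_real q) q k * qpoch (of_real q) q (N - k))))"
  proof (intro sum.cong refl)
    fix k assume "k \<in> {..N}"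
    then have k: "N = k + (N - k)" by auto
    have "z ^ k * of_real q ^ (N - k) = z ^ k * (u * z) ^ (N - k)" by (simp add: uz)
    also have "\<dots> = z ^ (k + (N - k)) * u ^ (N - k)" by (simp add: power_add power_mult_distrib)
    also have "\<dots> = z ^ N * u ^ (N - k)" using k by simp
    finally have e: "z ^ k * of_real q ^ (N - k) = z ^ N * u ^ (N - k)" .
    show "qpoch u q k * z ^ k * of_real q ^ (N - k) / (qpoch (of_real q) q k * qpoch (of_real q) q (N - k))
        = z ^ N * (qpoch u q k * u ^ (N - k) / (qpoch (of_real q) q k * qpoch (of_real q) q (N - k)))"
      using e by (simp add: mult_ac)
  qed
  also have "\<dots> = z ^ N / qpoch (of_real q) q N"
    unfolding sum_distrib_left[symmetric] qbin_id[OF q] by simp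
  finally show ?thesis .
qed

lemma r_qM:
  fixes q :: real
  assumes "0 < q" "r = of_real (q powi (- int M))"
  shows "r * of_real (q ^ M) = 1"
proof -
  have "r * of_real (q ^ M) = of_real (inverse (q ^ M) * q ^ M)"
    using assms(2) by (simp only: power_int_minus power_int_of_nat of_real_mult)
  also have "\<dots> = 1" using assms(1) by simp
  finally show ?thesis .
qed

lemma qpoch_r_zero:
  fixes q :: real
  assumes q: "0 < q" and r: "r = of_real (q powi (- int M))" and k: "k \<le> M" and n: "M < k + n"
  shows "qpoch (r * of_real (q ^ k)) q n = 0"
  unfolding qpoch_def
proof (rule prod_zero)
  have e: "(q ^ k * q ^ (M - k) :: real) = q ^ M" using k by (metis le_add_diff_inverse power_add)
  have e2: "r * of_real (q ^ k) * of_real (q ^ (M - k)) = r * of_real (q ^ M)"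
    by (simp only: mult.assoc of_real_mult[symmetric] e)
  have "1 - r * of_real (q ^ k) * of_real (q ^ (M - k)) = 0" unfolding e2 r_qM[OF q r] by simp
  then show "\<exists>j\<in>{..<n}. 1 - r * of_real (q ^ k) * of_real (q ^ j) = 0" using k n by (intro bexI[of _ "M - k"]) auto
qed simp

lemma qpoch_r_zero0:
  fixes q :: real
  assumes q: "0 < q" and r: "r = of_real (q powi (- int M))" and n: "M < n"
  shows "qpoch r q n = 0"
  using qpoch_r_zero[OF q r, of 0 n] n by simp

lemma phi32_fin:
  assumes "\<And>n. n > N \<Longrightarrow> qpoch a1 q n = 0"
  shows "phi32 a1 a2 a3 b1 b2 q z = (\<Sum>n\<le>N. qpoch a1 q n * qpoch a2 q n * qpoch a3 q n
           / (qpoch b1 q n * qpoch b2 q n * qpoch (of_real q) q n) * z ^ n)"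
  unfolding phi32_def by (rule suminf_finite) (use assms in auto)

lemma main_fin:
  fixes q :: real and r f g v w u z :: complex
  assumes q: "0 < q" "q < 1" and r: "r = of_real (q powi (- int M))"
    and v: "\<forall>n::nat. v * of_real (q ^ n) \<noteq> 1" and w: "\<forall>n::nat. w * of_real (q ^ n) \<noteq> 1"
    and uz: "u * z = of_real q"
  shows "(\<Sum>k\<le>M. qpoch r q k * qpoch f q k * qpoch g q k * qpoch u q k * z ^ k
              / (qpoch v q k * qpoch w q k * qpoch (of_real q) q k)
           * phi32 (r * of_real (q ^ k)) (f * of_real (q ^ k)) (g * of_real (q ^ k))
                   (v * of_real (q ^ k)) (w * of_real (q ^ k)) q (of_real q))
         = phi32 r f g v w q z"
proof -
  let ?Q = "qpoch (of_real q) q"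
  define V where "V N = qpoch r q N * qpoch f q N * qpoch g q N / (qpoch v q N * qpoch w q N)" for N
  define X where "X k n = qpoch u q k * z ^ k * of_real q ^ n / (?Q k * ?Q n)" for k n
  have nzQ: "?Q n \<noteq> 0" for n by (rule Qn_nonzero[OF q])
  have nzv: "qpoch (v * of_real (q ^ k)) q n \<noteq> 0" for k n
    by (rule qpoch_nonzero) (use v in \<open>auto simp: mult.assoc power_add[symmetric]\<close>)
  have nzw: "qpoch (w * of_real (q ^ k)) q n \<noteq> 0" for k n
    by (rule qpoch_nonzero) (use w in \<open>auto simp: mult.assoc power_add[symmetric]\<close>)
  have nzv0: "qpoch v q n \<noteq> 0" for n using nzv[of 0 n] by simp
  have nzw0: "qpoch w q n \<noteq> 0" for n using nzw[of 0 n] by simp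
  have V0: "V N = 0" if "N > M" for N using qpoch_r_zero0[OF q(1) r that] by (simp add: V_def)
  have step: "qpoch r q k * qpoch f q k * qpoch g q k * qpoch u q k * z ^ k
              / (qpoch v q k * qpoch w q k * ?Q k)
           * phi32 (r * of_real (q ^ k)) (f * of_real (q ^ k)) (g * of_real (q ^ k))
                   (v * of_real (q ^ k)) (w * of_real (q ^ k)) q (of_real q)
         = (\<Sum>n\<le>M. V (k + n) * X k n)" if k: "k \<le> M" for k
  proof -
    have pe: "phi32 (r * of_real (q ^ k)) (f * of_real (q ^ k)) (g * of_real (q ^ k))
                   (v * of_real (q ^ k)) (w * of_real (q ^ k)) q (of_real q)
        = (\<Sum>n\<le>M. qpoch (r * of_real (q ^ k)) q n * qpoch (f * of_real (q ^ k)) q n * qpoch (g * of_real (q ^ k)) q n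
           / (qpoch (v * of_real (q ^ k)) q n * qpoch (w * of_real (q ^ k)) q n * ?Q n) * of_real q ^ n)"
      by (rule phi32_fin) (use qpoch_r_zero[OF q(1) r k] in auto)
    show ?thesis
      unfolding pe sum_distrib_left
    proof (intro sum.cong refl)
      fix n
      show "qpoch r q k * qpoch f q k * qpoch g q k * qpoch u q k * z ^ k / (qpoch v q k * qpoch w q k * ?Q k) *
         (qpoch (r * of_real (q ^ k)) q n * qpoch (f * of_real (q ^ k)) q n * qpoch (g * of_real (q ^ k)) q n /
          (qpoch (v * of_real (q ^ k)) q n * qpoch (w * of_real (q ^ k)) q n * ?Q n) * of_real q ^ n) =
         V (k + n) * X k n"
        unfolding V_def X_def qpoch_add
        using nzQ[of k] nzQ[of n] nzv[of k n] nzw[of k n] nzv0[of k] nzw0[of k]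
        by (simp add: field_simps)
    qed
  qed
  have "(\<Sum>k\<le>M. qpoch r q k * qpoch f q k * qpoch g q k * qpoch u q k * z ^ k
              / (qpoch v q k * qpoch w q k * ?Q k)
           * phi32 (r * of_real (q ^ k)) (f * of_real (q ^ k)) (g * of_real (q ^ k))
                   (v * of_real (q ^ k)) (w * of_real (q ^ k)) q (of_real q))
      = (\<Sum>k\<le>M. \<Sum>n\<le>M. V (k + n) * X k n)"
    by (intro sum.cong refl step) auto
  also have "\<dots> = (\<Sum>(k, n)\<in>{..M} \<times> {..M}. V (k + n) * X k n)"
    by (rule sum.cartesian_product)
  also have "\<dots> = (\<Sum>(k, n)\<in>{(i, j). i + j \<le> M}. V (k + n) * X k n)"
    by (rule sum.mono_neutral_right) (auto, meson V0 not_le)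
  also have "\<dots> = (\<Sum>N\<le>M. \<Sum>k\<le>N. V (k + (N - k)) * X k (N - k))"
    by (rule sum.triangle_reindex_eq)
  also have "\<dots> = (\<Sum>N\<le>M. V N * (z ^ N / ?Q N))"
  proof (intro sum.cong refl)
    fix N
    have "(\<Sum>k\<le>N. V (k + (N - k)) * X k (N - k)) = (\<Sum>k\<le>N. V N * X k (N - k))"
      by (intro sum.cong refl) auto
    also have "\<dots> = V N * (z ^ N / ?Q N)"
      unfolding sum_distrib_left[symmetric] X_def by (simp add: qbin_id_z[OF q uz])
    finally show "(\<Sum>k\<le>N. V (k + (N - k)) * X k (N - k)) = V N * (z ^ N / ?Q N)" .
  qed
  also have "\<dots> = phi32 r f g v w q z"
  proof (subst phi32_fin[of M])
    show "\<And>n. M < n \<Longrightarrow> qpoch r q n = 0" using qpoch_r_zero0[OF q(1) r] by auto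
    show "(\<Sum>N\<le>M. V N * (z ^ N / ?Q N)) = (\<Sum>n\<le>M. qpoch r q n * qpoch f q n * qpoch g q n /
          (qpoch v q n * qpoch w q n * ?Q n) * z ^ n)"
      by (intro sum.cong refl) (simp add: V_def)
  qed
  finally show ?thesis .
qed


lemma qpoch_div_pow:
  assumes "t \<noteq> 0"
  shows "qpoch (c / t) q k * t ^ k = (\<Prod>j<k. t - c * of_real (q ^ j))"
proof -
  have "qpoch (c / t) q k * t ^ k = (\<Prod>j<k. (1 - c / t * of_real (q ^ j)) * t)"
    by (simp add: qpoch_def prod.distrib)
  also have "\<dots> = (\<Prod>j<k. t - c * of_real (q ^ j))"
    using assms by (intro prod.cong refl) (simp add: field_simps)
  finally show ?thesis .
qed

theorem theorem6:
  fixes q :: real and M :: nat and a b c d f g v w r :: complex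
  assumes "0 < q" "q < 1"
    and "r = of_real (q powi (- int M))"
    and "b \<noteq> 0" "c \<noteq> 0" "d \<noteq> 0"
    and "cmod (a * c) < 1" "cmod (a * d) < 1" "cmod (b * c) < 1" "cmod (b * d) < 1"
    and "cmod (of_real q / (b * c)) < 1"
    and "\<forall>n::nat. v * of_real (q ^ n) \<noteq> 1" "\<forall>n::nat. w * of_real (q ^ n) \<noteq> 1"
  shows "jackson (\<lambda>t.
            qpoch_inf (of_real q * t / c) q * qpoch_inf (of_real q * t / d) q
            / (qpoch_inf (a * t) q * qpoch_inf (b * t) q)
            * (\<Sum>k. qpoch r q k * qpoch f q k * qpoch g q k * qpoch (c / t) q k
                     * qpoch (a * b * c * d) q k * (of_real q * t / (b * c * d)) ^ k
                   / (qpoch v q k * qpoch w q k * qpoch (a * c) q k * qpoch (of_real q) q k)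
                   * phi32 (r * of_real (q ^ k)) (f * of_real (q ^ k)) (g * of_real (q ^ k))
                           (v * of_real (q ^ k)) (w * of_real (q ^ k)) q (of_real q)))
           q c d
       = d * of_real (1 - q) * qpoch_inf (of_real q) q * qpoch_inf (d * of_real q / c) q
           * qpoch_inf (c / d) q * qpoch_inf (a * b * c * d) q
         / (qpoch_inf (a * c) q * qpoch_inf (a * d) q * qpoch_inf (b * c) q * qpoch_inf (b * d) q)
         * phi32 r f g v w q (of_real q / (b * c))"
proof -
  note q = assms(1,2) and r = assms(3) and b0 = assms(4) and vw = assms(12,13)
  interpret aa q a b c d using assms by unfold_locales auto
  define \<Phi> where "\<Phi> k = phi32 (r * of_real (q ^ k)) (f * of_real (q ^ k)) (g * of_real (q ^ k))
                           (v * of_real (q ^ k)) (w * of_real (q ^ k)) q (of_real q)" for k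
  define T where "T t k = qpoch r q k * qpoch f q k * qpoch g q k * qpoch (c / t) q k
                     * qpoch (a * b * c * d) q k * (of_real q * t / (b * c * d)) ^ k
                   / (qpoch v q k * qpoch w q k * qpoch (a * c) q k * qpoch (of_real q) q k)
                   * \<Phi> k" for t k
  define E where "E k = qpoch r q k * qpoch f q k * qpoch g q k
                     * qpoch (a * b * c * d) q k * (of_real q / (b * c * d)) ^ k
                   / (qpoch v q k * qpoch w q k * qpoch (a * c) q k * qpoch (of_real q) q k)
                   * \<Phi> k" for k
  define F where "F t = W t * (\<Sum>k. T t k)" for t
  have TE: "T t k = E k * P k t" if t: "t \<noteq> 0" for t k
  proof -
    have "qpoch (c / t) q k * (of_real q * t / (b * c * d)) ^ k = (of_real q / (b * c * d)) ^ k * (qpoch (c / t) q k * t ^ k)"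
      by (simp add: power_mult_distrib power_divide mult_ac)
    also have "\<dots> = (of_real q / (b * c * d)) ^ k * P k t" unfolding qpoch_div_pow[OF t] P_def ..
    finally have e: "qpoch (c / t) q k * (of_real q * t / (b * c * d)) ^ k = (of_real q / (b * c * d)) ^ k * P k t" .
    show ?thesis unfolding T_def E_def using e
      by (simp add: mult_ac)
  qed
  have Tsum: "(\<Sum>k. T t k) = (\<Sum>k\<le>M. E k * P k t)" if t: "t \<noteq> 0" for t
  proof -
    have "(\<Sum>k. T t k) = (\<Sum>k\<le>M. T t k)"
      by (rule suminf_finite) (auto simp: T_def qpoch_r_zero0[OF q(1) r])
    then show ?thesis using TE[OF t] by simp
  qed
  have Fsum: "(\<Sum>n. F (x * of_real (q ^ n)) * of_real (q ^ n)) = (\<Sum>k\<le>M. E k * S k x)"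
    if x: "x = c \<or> x = d" for x
  proof -
    have xn: "x * of_real (q ^ n) \<noteq> 0" for n using x c0 d0 q by auto
    have "(\<Sum>n. F (x * of_real (q ^ n)) * of_real (q ^ n))
        = (\<Sum>n. \<Sum>k\<le>M. E k * (W (x * of_real (q ^ n)) * P k (x * of_real (q ^ n)) * of_real (q ^ n)))"
      unfolding F_def Tsum[OF xn]
      by (simp add: sum_distrib_left sum_distrib_right mult_ac)
    also have "\<dots> = (\<Sum>k\<le>M. \<Sum>n. E k * (W (x * of_real (q ^ n)) * P k (x * of_real (q ^ n)) * of_real (q ^ n)))"
      by (rule suminf_sum) (intro summable_mult summable_S)
    also have "\<dots> = (\<Sum>k\<le>M. E k * S k x)"
      unfolding S_def by (intro sum.cong refl suminf_mult summable_S)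
    finally show ?thesis .
  qed
  have fc: "(\<Sum>n. F (c * of_real (q ^ n)) * of_real (q ^ n)) = (\<Sum>k\<le>M. E k * S k c)"
    by (rule Fsum) simp
  have fd: "(\<Sum>n. F (d * of_real (q ^ n)) * of_real (q ^ n)) = (\<Sum>k\<le>M. E k * S k d)"
    by (rule Fsum) simp
  have J: "jackson F q c d = of_real (1 - q) * (\<Sum>k\<le>M. E k * K k)"
    unfolding jackson_def jackson0_def fc fd K_def
    by (simp add: sum_distrib_left sum_subtractf algebra_simps)
  have nac: "qpoch (a * c) q k \<noteq> 0" for k by (rule qpoch_nonzero[OF small_ne_1[OF qq ac]])
  have nabcd: "qpoch (a * b * c * d) q k \<noteq> 0" for k by (rule qpoch_nonzero[OF small_ne_1[OF qq abcd_small]])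
  have EK: "E k * K k = K 0 * (qpoch r q k * qpoch f q k * qpoch g q k * qpoch (b * c) q k * (of_real q / (b * c)) ^ k
              / (qpoch v q k * qpoch w q k * qpoch (of_real q) q k) * \<Phi> k)" for k
  proof -
    have pw: "(of_real q / (b * c * d)) ^ k * d ^ k = (of_real q / (b * c)) ^ k"
      using d0 by (simp add: power_mult_distrib[symmetric])
    show ?thesis
      unfolding E_def K_closed[of k]
      using nac[of k] nabcd[of k] pw b0 c0 d0
      by (simp add: field_simps)
  qed
  have fin: "(\<Sum>k\<le>M. qpoch r q k * qpoch f q k * qpoch g q k * qpoch (b * c) q k * (of_real q / (b * c)) ^ k
              / (qpoch v q k * qpoch w q k * qpoch (of_real q) q k) * \<Phi> k) = phi32 r f g v w q (of_real q / (b * c))"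
    unfolding \<Phi>_def by (rule main_fin[OF q r vw]) (use b0 c0 in simp)
  have J2: "jackson F q c d = of_real (1 - q) * K 0 * phi32 r f g v w q (of_real q / (b * c))"
    unfolding J EK sum_distrib_left[symmetric] fin by (simp add: mult_ac)
  have nQ: "qpoch_inf (a * c) q \<noteq> 0" "qpoch_inf (a * d) q \<noteq> 0" "qpoch_inf (b * c) q \<noteq> 0" "qpoch_inf (b * d) q \<noteq> 0"
    using qpoch_inf_nonzero[OF qq small_ne_1[OF qq ac]] qpoch_inf_nonzero[OF qq small_ne_1[OF qq ad]]
          qpoch_inf_nonzero[OF qq small_ne_1[OF qq bc]] qpoch_inf_nonzero[OF qq small_ne_1[OF qq bd]] by auto
  have Wd: "W d = qpoch_inf (d * of_real q / c) q * qpoch_inf (of_real q) q / (qpoch_inf (a * d) q * qpoch_inf (b * d) q)"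
    unfolding W_def using d0 by (simp add: mult.commute)
  have RHS: "of_real (1 - q) * K 0 * phi32 r f g v w q (of_real q / (b * c))
       = d * of_real (1 - q) * qpoch_inf (of_real q) q * qpoch_inf (d * of_real q / c) q
           * qpoch_inf (c / d) q * qpoch_inf (a * b * c * d) q
         / (qpoch_inf (a * c) q * qpoch_inf (a * d) q * qpoch_inf (b * c) q * qpoch_inf (b * d) q)
         * phi32 r f g v w q (of_real q / (b * c))"
    unfolding K0_eq Wd using nQ by (simp add: field_simps)
  have "jackson F q c d = d * of_real (1 - q) * qpoch_inf (of_real q) q * qpoch_inf (d * of_real q / c) q
           * qpoch_inf (c / d) q * qpoch_inf (a * b * c * d) q
         / (qpoch_inf (a * c) q * qpoch_inf (a * d) q * qpoch_inf (b * c) q * qpoch_inf (b * d) q)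
         * phi32 r f g v w q (of_real q / (b * c))"
    using J2 RHS by simp
  moreover have "F = (\<lambda>t.
            qpoch_inf (of_real q * t / c) q * qpoch_inf (of_real q * t / d) q
            / (qpoch_inf (a * t) q * qpoch_inf (b * t) q)
            * (\<Sum>k. qpoch r q k * qpoch f q k * qpoch g q k * qpoch (c / t) q k
                     * qpoch (a * b * c * d) q k * (of_real q * t / (b * c * d)) ^ k
                   / (qpoch v q k * qpoch w q k * qpoch (a * c) q k * qpoch (of_real q) q k)
                   * phi32 (r * of_real (q ^ k)) (f * of_real (q ^ k)) (g * of_real (q ^ k))
                           (v * of_real (q ^ k)) (w * of_real (q ^ k)) q (of_real q)))"
    by (rule ext) (simp only: F_def W_def T_def \<Phi>_def)
  ultimately show ?thesis by simp
qed


end
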